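(* For any graph $\Gamma$, the polygraph monoid $P(\Gamma)=IH^0(M(\Gamma))$ is strongly $F^*$-inverse.
   Context: A graph $\Gamma=(V,E)$ has vertex set $V$ and irreflexive symmetric edge relation $E$. The graph monoid $M(\Gamma)$ is the monoid presented by $\langle x_v\ (v\in V)\mid x_ux_v=x_vx_u \text{ for } (u,v)\in E\rangle$. For a right cancellative monoid $D$ and $a\in D$, $\rho_a:D\to D$, $x\mapsto xa$, is regarded as a partial bijection of $D$; the inverse hull $IH(D)$ is the inverse submonoid of the symmetric inverse monoid on $D$ generated by all $\rho_a$, and $IH^0(D)=IH(D)\cup\{\emptyset\}$ (the empty map being a zero). In an inverse monoid, the natural partial order is $a\le b$ iff $a=eb$ for some idempotent $e$. An inverse monoid $S$ is $F^*$-inverse if every nonzero element (every element, if $S$ has no zero) lies beneath a unique maximal element in the natural partial order. $S$ is strongly $E^*$-unitary if there is a group $G$ and a function $\theta:S\to G^0$ ($G$ with a zero adjoined) such that $a\theta=0$ iff $a$ is the zero of $S$, $a\theta=1$ iff $a$ is a nonzero idempotent, and $(ab)\theta=(a\theta)(b\theta)$ whenever $ab$ is not zero. $S$ is strongly $F^*$-inverse if it is both $F^*$-inverse and strongly $E^*$-unitary. *)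

theory Defs
  imports "HOL-Algebra.Group"
begin

definition trace_step :: "('v \<Rightarrow> 'v \<Rightarrow> bool) \<Rightarrow> 'v list \<Rightarrow> 'v list \<Rightarrow> bool" where
  "trace_step E xs ys \<longleftrightarrow>
     (\<exists>us a b ws. E a b \<and> xs = us @ [a, b] @ ws \<and> ys = us @ [b, a] @ ws)"

definition trace_eq :: "('v \<Rightarrow> 'v \<Rightarrow> bool) \<Rightarrow> 'v list \<Rightarrow> 'v list \<Rightarrow> bool" where
  "trace_eq E = (\<lambda>xs ys. trace_step E xs ys \<or> trace_step E ys xs)\<^sup>*\<^sup>*"

definition gm_class :: "('v \<Rightarrow> 'v \<Rightarrow> bool) \<Rightarrow> 'v list \<Rightarrow> 'v list set" where
  "gm_class E xs = {ys. trace_eq E xs ys}"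

definition graph_monoid :: "'v set \<Rightarrow> ('v \<Rightarrow> 'v \<Rightarrow> bool) \<Rightarrow> 'v list set set" where
  "graph_monoid V E = gm_class E ` lists V"

definition gm_mult :: "('v \<Rightarrow> 'v \<Rightarrow> bool) \<Rightarrow> 'v list set \<Rightarrow> 'v list set \<Rightarrow> 'v list set" where
  "gm_mult E X Y = {zs. \<exists>xs\<in>X. \<exists>ys\<in>Y. trace_eq E (xs @ ys) zs}"

text \<open>Partial maps act on the right: x(fg) = (xf)g.\<close>
definition pmult :: "('a \<rightharpoonup> 'a) \<Rightarrow> ('a \<rightharpoonup> 'a) \<Rightarrow> ('a \<rightharpoonup> 'a)" where
  "pmult f g = g \<circ>\<^sub>m f"

definition pid :: "'a set \<Rightarrow> ('a \<rightharpoonup> 'a)" where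
  "pid D = (\<lambda>x. if x \<in> D then Some x else None)"

definition pinv :: "('a \<rightharpoonup> 'a) \<Rightarrow> ('a \<rightharpoonup> 'a)" where
  "pinv f = (\<lambda>y. if y \<in> ran f then Some (THE x. f x = Some y) else None)"

definition right_translation :: "'a set \<Rightarrow> ('a \<Rightarrow> 'a \<Rightarrow> 'a) \<Rightarrow> 'a \<Rightarrow> ('a \<rightharpoonup> 'a)" where
  "right_translation D op a = (\<lambda>x. if x \<in> D then Some (op x a) else None)"

inductive_set inv_submonoid_gen :: "'a set \<Rightarrow> ('a \<rightharpoonup> 'a) set \<Rightarrow> ('a \<rightharpoonup> 'a) set"
  for D :: "'a set" and gens :: "('a \<rightharpoonup> 'a) set" where
  gen_id: "pid D \<in> inv_submonoid_gen D gens"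
| gen_gen: "f \<in> gens \<Longrightarrow> f \<in> inv_submonoid_gen D gens"
| gen_mult: "f \<in> inv_submonoid_gen D gens \<Longrightarrow> g \<in> inv_submonoid_gen D gens
      \<Longrightarrow> pmult f g \<in> inv_submonoid_gen D gens"
| gen_inv: "f \<in> inv_submonoid_gen D gens \<Longrightarrow> pinv f \<in> inv_submonoid_gen D gens"

definition inverse_hull :: "'a set \<Rightarrow> ('a \<Rightarrow> 'a \<Rightarrow> 'a) \<Rightarrow> ('a \<rightharpoonup> 'a) set" where
  "inverse_hull D op = inv_submonoid_gen D (right_translation D op ` D)"

definition inverse_hull0 :: "'a set \<Rightarrow> ('a \<Rightarrow> 'a \<Rightarrow> 'a) \<Rightarrow> ('a \<rightharpoonup> 'a) set" where
  "inverse_hull0 D op = insert Map.empty (inverse_hull D op)"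

definition polygraph_monoid ::
  "'v set \<Rightarrow> ('v \<Rightarrow> 'v \<Rightarrow> bool) \<Rightarrow> ('v list set \<rightharpoonup> 'v list set) set" where
  "polygraph_monoid V E = inverse_hull0 (graph_monoid V E) (gm_mult E)"

definition is_zero :: "'a set \<Rightarrow> ('a \<Rightarrow> 'a \<Rightarrow> 'a) \<Rightarrow> 'a \<Rightarrow> bool" where
  "is_zero S op z \<longleftrightarrow> z \<in> S \<and> (\<forall>x\<in>S. op z x = z \<and> op x z = z)"

definition nat_le :: "'a set \<Rightarrow> ('a \<Rightarrow> 'a \<Rightarrow> 'a) \<Rightarrow> 'a \<Rightarrow> 'a \<Rightarrow> bool" where
  "nat_le S op a b \<longleftrightarrow> (\<exists>e\<in>S. op e e = e \<and> a = op e b)"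

definition F_star_inverse :: "'a set \<Rightarrow> ('a \<Rightarrow> 'a \<Rightarrow> 'a) \<Rightarrow> bool" where
  "F_star_inverse S op \<longleftrightarrow>
     (\<forall>a\<in>S. \<not> is_zero S op a \<longrightarrow>
        (\<exists>!m. m \<in> S \<and> nat_le S op a m \<and> (\<forall>n\<in>S. nat_le S op m n \<longrightarrow> n = m)))"

text \<open>Multiplication in G^0 (None plays the role of the adjoined zero).\<close>
definition zmult :: "('g, 'b) monoid_scheme \<Rightarrow> 'g option \<Rightarrow> 'g option \<Rightarrow> 'g option" where
  "zmult G x y = (case (x, y) of (Some g, Some h) \<Rightarrow> Some (g \<otimes>\<^bsub>G\<^esub> h) | _ \<Rightarrow> None)"

definition strongly_E_star_unitary_wrt ::
  "('g, 'b) monoid_scheme \<Rightarrow> 'a set \<Rightarrow> ('a \<Rightarrow> 'a \<Rightarrow> 'a) \<Rightarrow> bool" where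
  "strongly_E_star_unitary_wrt G S op \<longleftrightarrow>
     (\<exists>\<theta> :: 'a \<Rightarrow> 'g option.
        (\<forall>a\<in>S. \<forall>g. \<theta> a = Some g \<longrightarrow> g \<in> carrier G) \<and>
        (\<forall>a\<in>S. \<theta> a = None \<longleftrightarrow> is_zero S op a) \<and>
        (\<forall>a\<in>S. \<theta> a = Some \<one>\<^bsub>G\<^esub> \<longleftrightarrow> (\<not> is_zero S op a \<and> op a a = a)) \<and>
        (\<forall>a\<in>S. \<forall>b\<in>S. \<not> is_zero S op (op a b) \<longrightarrow>
            \<theta> (op a b) = zmult G (\<theta> a) (\<theta> b)))"

text \<open>Existence of a suitable group; w.l.o.g. its elements are taken from the type 'a list
  (the subgroup generated by the image of theta has cardinality at most that of 'a list).\<close>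
definition strongly_E_star_unitary :: "'a set \<Rightarrow> ('a \<Rightarrow> 'a \<Rightarrow> 'a) \<Rightarrow> bool" where
  "strongly_E_star_unitary S op \<longleftrightarrow>
     (\<exists>G :: 'a list monoid. group G \<and> strongly_E_star_unitary_wrt G S op)"

definition strongly_F_star_inverse :: "'a set \<Rightarrow> ('a \<Rightarrow> 'a \<Rightarrow> 'a) \<Rightarrow> bool" where
  "strongly_F_star_inverse S op \<longleftrightarrow> F_star_inverse S op \<and> strongly_E_star_unitary S op"

end

theory Submission
  imports Defs
begin


definition proj :: "'v \<Rightarrow> 'v \<Rightarrow> 'v list \<Rightarrow> 'v list" where
  "proj s t w = filter (\<lambda>x. x = s \<or> x = t) w"

lemma proj_simps[simp]: "proj s t [] = []"
  "proj s t (x#w) = (if x = s \<or> x = t then x # proj s t w else proj s t w)"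
  "proj s t (u@w) = proj s t u @ proj s t w"
  by (auto simp: proj_def)

locale trctx =
  fixes E :: "'v \<Rightarrow> 'v \<Rightarrow> bool"
  assumes irr: "\<And>u. \<not> E u u" and symm: "\<And>u v. E u v \<Longrightarrow> E v u"
begin

abbreviation te where "te \<equiv> trace_eq E"

lemma te_refl[simp]: "te x x" by (simp add: trace_eq_def)

lemma te_sym: "te x y \<Longrightarrow> te y x"
proof -
  have "symp (\<lambda>xs ys. trace_step E xs ys \<or> trace_step E ys xs)" by (auto simp: symp_def)
  then have "symp te" unfolding trace_eq_def by (rule symp_rtranclp)
  thus "te x y \<Longrightarrow> te y x" by (auto dest: sympD)
qed

lemma te_trans: "te x y \<Longrightarrow> te y z \<Longrightarrow> te x z"
  unfolding trace_eq_def by (rule rtranclp_trans)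

lemma step_ctx: "trace_step E xs ys \<Longrightarrow> trace_step E (p@xs@q) (p@ys@q)"
  unfolding trace_step_def by (metis append.assoc)

lemma te_ctx: "te xs ys \<Longrightarrow> te (p@xs@q) (p@ys@q)"
  unfolding trace_eq_def
proof (induction rule: rtranclp_induct)
  case base then show ?case by simp
next
  case (step y z)
  then show ?case using step_ctx by (metis (mono_tags, lifting) rtranclp.simps)
qed

lemma te_app: "te x x' \<Longrightarrow> te y y' \<Longrightarrow> te (x@y) (x'@y')"
  using te_ctx[of x x' "[]" y] te_ctx[of y y' x' "[]"] te_trans by auto

lemma te_cons: "te x x' \<Longrightarrow> te (c#x) (c#x')"
  using te_app[of "[c]" "[c]" x x'] by simp

lemma step_proj: "trace_step E xs ys \<Longrightarrow> \<not> E s t \<Longrightarrow> proj s t xs = proj s t ys"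
  unfolding trace_step_def using symm by (auto simp: proj_def)

lemma te_proj: "te xs ys \<Longrightarrow> \<not> E s t \<Longrightarrow> proj s t xs = proj s t ys"
  unfolding trace_eq_def
  by (induction rule: rtranclp_induct) (auto dest: step_proj)

lemma step_sl: "trace_step E xs ys \<Longrightarrow> set xs = set ys \<and> length xs = length ys"
  unfolding trace_step_def by auto

lemma te_sl: "te xs ys \<Longrightarrow> set xs = set ys \<and> length xs = length ys"
  unfolding trace_eq_def
  by (induction rule: rtranclp_induct) (auto dest: step_sl)

lemma te_set: "te xs ys \<Longrightarrow> set xs = set ys"
  by (metis te_sl)

lemma te_length: "te xs ys \<Longrightarrow> length xs = length ys"
  by (metis te_sl)

lemma step_rev: "trace_step E xs ys \<Longrightarrow> trace_step E (rev xs) (rev ys)"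
  unfolding trace_step_def
  apply clarify
  subgoal for us a b ws by (rule exI[of _ "rev ws"], rule exI[of _ b], rule exI[of _ a], auto intro: symm)
  done

lemma te_rev: "te xs ys \<Longrightarrow> te (rev xs) (rev ys)"
  unfolding trace_eq_def
proof (induction rule: rtranclp_induct)
  case base then show ?case by simp
next
  case (step y z)
  then show ?case using step_rev by (metis (mono_tags, lifting) rtranclp.simps)
qed

lemma te_rev_iff: "te (rev xs) (rev ys) \<longleftrightarrow> te xs ys"
  using te_rev[of "rev xs" "rev ys"] te_rev by auto

lemma te_swap: "E a b \<Longrightarrow> te (a#b#w) (b#a#w)"
  unfolding trace_eq_def trace_step_def
  by (rule r_into_rtranclp) (rule disjI1, rule exI[of _ "[]"], auto)

lemma te_commute: "(\<forall>l\<in>set u. E c l) \<Longrightarrow> te (u @ [c]) (c # u)"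
proof (induction u)
  case Nil then show ?case by simp
next
  case (Cons l u)
  then have "te ((l#u)@[c]) (l#c#u)" using te_cons by auto
  moreover have "te (l#c#u) (c#l#u)" using Cons.prems by (auto intro: te_swap symm)
  ultimately show ?case using te_trans by blast
qed

lemma proj_prefix:
  assumes "\<And>s t. \<not> E s t \<Longrightarrow> \<exists>r. proj s t w = proj s t u @ r"
  shows "\<exists>v. te w (u @ v)"
  using assms
proof (induction u arbitrary: w)
  case Nil then show ?case by (auto intro: exI[of _ w])
next
  case (Cons c u)
  from Cons.prems[of c c] irr obtain r where "proj c c w = c # proj c c u @ r" by auto
  then have "c \<in> set (proj c c w)" by simp
  then have "c \<in> set w" by (simp add: proj_def)
  then obtain w1 w2 where w: "w = w1 @ c # w2" and cw1: "c \<notin> set w1" by (metis split_list_first)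
  have comm: "\<forall>l\<in>set w1. E c l"
  proof
    fix l assume l: "l \<in> set w1"
    show "E c l"
    proof (rule ccontr)
      assume n: "\<not> E c l"
      then have "\<not> E l c" using symm by blast
      from Cons.prems[OF this] obtain r where r: "proj l c w = proj l c (c # u) @ r" by auto
      have ne: "proj l c w1 \<noteq> []" using l by (auto simp: proj_def filter_empty_conv)
      then obtain h hs where h: "proj l c w1 = h # hs" by (cases "proj l c w1") auto
      have "h \<in> set (proj l c w1)" using h by simp
      then have "h \<in> set w1" by (simp add: proj_def)
      moreover have "h = c" using r h w by simp
      ultimately show False using cw1 by simp
    qed
  qed
  have te1: "te w (c # w1 @ w2)" using te_app[OF te_commute[OF comm] te_refl[of w2]] w by simp
  have "\<exists>r. proj s t (w1 @ w2) = proj s t u @ r" if st: "\<not> E s t" for s t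
  proof -
    from Cons.prems[OF st] obtain r where r: "proj s t w = proj s t (c#u) @ r" by auto
    have "proj s t w = proj s t (c # w1 @ w2)" using te_proj[OF te1 st] .
    with r show ?thesis by (auto split: if_splits)
  qed
  from Cons.IH[OF this] obtain v where "te (w1 @ w2) (u @ v)" by blast
  then have "te (c # w1 @ w2) (c # u @ v)" by (rule te_cons)
  with te1 show ?case using te_trans by auto
qed

lemma proj_eq:
  assumes "\<And>s t. \<not> E s t \<Longrightarrow> proj s t u = proj s t w"
  shows "te u w"
proof -
  have "\<exists>v. te w (u @ v)"
  proof (rule proj_prefix)
    fix s t assume "\<not> E s t"
    then show "\<exists>r. proj s t w = proj s t u @ r" using assms[of s t] by (intro exI[of _ "[]"]) simp
  qed
  then obtain v where v: "te w (u @ v)" by blast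
  have pv: "proj s s v = []" for s
    using te_proj[OF v, of s s] assms[of s s] irr by simp
  have "v = []"
  proof (cases v)
    case (Cons y ys)
    then show ?thesis using pv[of y] by simp
  qed simp
  with v show ?thesis by (simp add: te_sym)
qed

definition pre where "pre u w \<longleftrightarrow> (\<exists>v. te w (u @ v))"

lemma pre_iff: "pre u w \<longleftrightarrow> (\<forall>s t. \<not> E s t \<longrightarrow> (\<exists>r. proj s t w = proj s t u @ r))"
proof
  assume "pre u w"
  then obtain v where v: "te w (u @ v)" unfolding pre_def by blast
  show "\<forall>s t. \<not> E s t \<longrightarrow> (\<exists>r. proj s t w = proj s t u @ r)"
  proof (intro allI impI)
    fix s t assume "\<not> E s t"
    then have "proj s t w = proj s t u @ proj s t v" using te_proj[OF v] by simp
    then show "\<exists>r. proj s t w = proj s t u @ r" by blast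
  qed
next
  assume "\<forall>s t. \<not> E s t \<longrightarrow> (\<exists>r. proj s t w = proj s t u @ r)"
  then show "pre u w" unfolding pre_def by (intro proj_prefix) blast
qed

lemma pre_refl[simp]: "pre u u" unfolding pre_def by (rule exI[of _ "[]"]) simp
lemma pre_Nil[simp]: "pre [] u" unfolding pre_def by (rule exI[of _ u]) simp
lemma pre_trans: assumes "pre u v" "pre v w" shows "pre u w"
proof -
  from assms obtain a b where a: "te v (u@a)" and b: "te w (v@b)" unfolding pre_def by blast
  have "te (v@b) (u@a@b)" using te_app[OF a te_refl[of b]] by simp
  then have "te w (u@(a@b))" using b te_trans by blast
  then show ?thesis unfolding pre_def by blast
qed
lemma pre_te: "te w w' \<Longrightarrow> pre u w \<longleftrightarrow> pre u w'"
  unfolding pre_def using te_trans te_sym by blast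
lemma pre_te1: assumes "te u u'" shows "pre u w \<longleftrightarrow> pre u' w"
proof -
  have "te (u@v) (u'@v)" "te (u'@v) (u@v)" for v using te_app[OF assms te_refl] te_app[OF te_sym[OF assms] te_refl] by auto
  then show ?thesis unfolding pre_def using te_trans by blast
qed
lemma pre_app: "pre u (u@v)" unfolding pre_def by (rule exI[of _ v]) simp

lemma cancel_left: assumes "te (a@x) (a@y)" shows "te x y"
proof (rule proj_eq)
  fix s t assume "\<not> E s t" then show "proj s t x = proj s t y" using te_proj[OF assms] by simp
qed
lemma cancel_right: assumes "te (x@a) (y@a)" shows "te x y"
proof (rule proj_eq)
  fix s t assume "\<not> E s t" then show "proj s t x = proj s t y" using te_proj[OF assms] by simp
qed

lemma pre_cons_cancel: "pre (c#u) (c#w) \<Longrightarrow> pre u w"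
  unfolding pre_def using cancel_left[of "[c]"] by auto

lemma pre_cons: "pre u w \<Longrightarrow> pre (c#u) (c#w)"
  unfolding pre_def using te_cons by auto

lemma Lc:
  assumes "pre [d] x" "pre h x" "\<not> pre [d] h"
  shows "(\<forall>l\<in>set h. E d l) \<and> pre (d # h) x"
proof -
  from assms(3) obtain s t where st: "\<not> E s t" and nr: "\<not> (\<exists>r. proj s t h = proj s t [d] @ r)"
    unfolding pre_iff by blast
  from assms(1) st obtain r1 where r1: "proj s t x = proj s t [d] @ r1" unfolding pre_iff by blast
  from assms(2) st obtain r2 where r2: "proj s t x = proj s t h @ r2" unfolding pre_iff by blast
  have dst: "d = s \<or> d = t" using nr by (auto split: if_splits)
  then have px: "proj s t x = d # r1" using r1 by simp
  have hnil: "proj s t h = []"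
  proof (rule ccontr)
    assume "proj s t h \<noteq> []"
    then obtain y ys where "proj s t h = y # ys" by (cases "proj s t h") auto
    then show False using px r2 nr dst by auto
  qed
  have dh: "d \<notin> set h" using hnil dst by (auto simp: proj_def filter_empty_conv)
  have comm: "\<forall>l\<in>set h. E d l"
  proof
    fix l assume l: "l \<in> set h"
    show "E d l"
    proof (rule ccontr)
      assume n: "\<not> E d l"
      from assms(1) n obtain q1 where q1: "proj d l x = d # q1" unfolding pre_iff by fastforce
      from assms(2) n obtain q2 where q2: "proj d l x = proj d l h @ q2" unfolding pre_iff by blast
      have ne: "proj d l h \<noteq> []" using l by (auto simp: proj_def filter_empty_conv)
      then obtain y ys where y: "proj d l h = y # ys" by (cases "proj d l h") auto
      have "y \<in> set (proj d l h)" using y by simp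
      then have "y \<in> set h" by (simp add: proj_def)
      moreover have "y = d" using q1 q2 y by simp
      ultimately show False using dh by simp
    qed
  qed
  have "pre (d # h) x"
    unfolding pre_iff
  proof (intro allI impI)
    fix s t assume st: "\<not> E s t"
    show "\<exists>r. proj s t x = proj s t (d # h) @ r"
    proof (cases "d = s \<or> d = t")
      case True
      have "proj s t h = []"
      proof (rule ccontr)
        assume "proj s t h \<noteq> []"
        then obtain l where l: "l \<in> set h" "l = s \<or> l = t" by (auto simp: proj_def filter_empty_conv)
        then have "l \<noteq> d" using dh by auto
        then have "\<not> E d l" using st True l(2) symm irr by auto
        then show False using comm l(1) by auto
      qed
      moreover obtain r where "proj s t x = proj s t [d] @ r" using assms(1)[unfolded pre_iff, rule_format, OF st] by blast
      ultimately show ?thesis using True by auto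
    next
      case False
      with assms(2) st show ?thesis unfolding pre_iff by auto
    qed
  qed
  with comm show ?thesis by blast
qed

end


context trctx begin

lemma pre_set: assumes "pre u w" shows "set u \<subseteq> set w"
proof -
  from assms obtain v where "te w (u@v)" unfolding pre_def by blast
  from te_set[OF this] show ?thesis by auto
qed

lemma gcd_ex: "\<exists>g. pre g a \<and> pre g b \<and> (\<forall>h. pre h a \<longrightarrow> pre h b \<longrightarrow> pre h g)"
proof (induction "length a" arbitrary: a b rule: less_induct)
  case less
  show ?case
  proof (cases "\<exists>c a' b'. te a (c#a') \<and> te b (c#b')")
    case True
    then obtain c a' b' where ca: "te a (c#a')" and cb: "te b (c#b')" by blast
    have "length a' < length a" using te_length[OF ca] by simp
    from less[OF this] obtain g' where g': "pre g' a'" "pre g' b'"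
      "\<forall>h. pre h a' \<longrightarrow> pre h b' \<longrightarrow> pre h g'" by blast
    show ?thesis
    proof (intro exI conjI allI impI)
      show "pre (c#g') a" using pre_cons[OF g'(1)] pre_te[OF ca] by simp
      show "pre (c#g') b" using pre_cons[OF g'(2)] pre_te[OF cb] by simp
      fix h assume h: "pre h a" "pre h b"
      show "pre h (c#g')"
      proof (cases "pre [c] h")
        case True
        then obtain h' where hh: "te h (c#h')" unfolding pre_def by auto
        then have "pre (c#h') a" "pre (c#h') b" using h pre_te1 by auto
        then have "pre (c#h') (c#a')" "pre (c#h') (c#b')" using pre_te[OF ca] pre_te[OF cb] by auto
        then have "pre h' a'" "pre h' b'" using pre_cons_cancel by auto
        then have "pre h' g'" using g'(3) by blast
        then have "pre (c#h') (c#g')" by (rule pre_cons)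
        then show ?thesis using hh pre_te1 by blast
      next
        case False
        have pca: "pre [c] a" using ca unfolding pre_def by auto
        have pcb: "pre [c] b" using cb unfolding pre_def by auto
        from Lc[OF pca h(1) False] have comm: "\<forall>l\<in>set h. E c l" and p1: "pre (c#h) a" by auto
        from Lc[OF pcb h(2) False] have p2: "pre (c#h) b" by auto
        have "pre (c#h) (c#a')" "pre (c#h) (c#b')" using p1 p2 pre_te[OF ca] pre_te[OF cb] by auto
        then have "pre h a'" "pre h b'" using pre_cons_cancel by auto
        then have "pre h g'" using g'(3) by blast
        then obtain r where r: "te g' (h@r)" unfolding pre_def by blast
        have t1: "te (c#g') (c#h@r)" using te_cons[OF r] .
        have "te (h@[c]@r) (c#h@r)" using te_app[OF te_commute[OF comm] te_refl[of r]] by simp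
        then have "te (c#g') (h@(c#r))" using te_trans[OF t1 te_sym] by simp
        then show ?thesis unfolding pre_def by blast
      qed
    qed
  next
    case False
    show ?thesis
    proof (intro exI[of _ "[]"] conjI allI impI)
      fix h assume h: "pre h a" "pre h b"
      show "pre h []"
      proof (cases h)
        case (Cons c h'')
        have "pre [c] h" using Cons pre_app[of "[c]" h''] by simp
        then have "pre [c] a" "pre [c] b" using h pre_trans by blast+
        then obtain a' b' where "te a ([c]@a')" "te b ([c]@b')" unfolding pre_def by blast
        then show ?thesis using False by auto
      qed simp
    qed simp_all
  qed
qed

lemma lcm_ex: "pre b x \<Longrightarrow> pre c x \<Longrightarrow> \<exists>w. pre b w \<and> pre c w \<and> (\<forall>y. pre b y \<longrightarrow> pre c y \<longrightarrow> pre w y)"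
proof (induction b arbitrary: c x)
  case Nil
  then show ?case by (intro exI[of _ c]) auto
next
  case (Cons d b')
  have pdx: "pre [d] x" using pre_trans[OF _ Cons.prems(1)] pre_app[of "[d]" b'] by simp
  from Cons.prems(1) obtain r1 where r1: "te x (d#b'@r1)" unfolding pre_def by auto
  show ?case
  proof (cases "pre [d] c")
    case True
    then obtain c' where c': "te c (d#c')" unfolding pre_def by auto
    have "pre (d#c') x" using Cons.prems(2) pre_te1[OF c'] by simp
    then have "pre (d#c') (d#b'@r1)" using pre_te[OF r1] by simp
    then have pc': "pre c' (b'@r1)" by (rule pre_cons_cancel)
    from Cons.IH[OF pre_app pc'] obtain w' where w': "pre b' w'" "pre c' w'"
      "\<forall>y. pre b' y \<longrightarrow> pre c' y \<longrightarrow> pre w' y" by blast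
    show ?thesis
    proof (intro exI[of _ "d#w'"] conjI allI impI)
      show "pre (d#b') (d#w')" using pre_cons[OF w'(1)] .
      show "pre c (d#w')" using pre_cons[OF w'(2)] pre_te1[OF c'] by simp
      fix y assume y: "pre (d#b') y" "pre c y"
      from y(1) obtain r where r: "te y (d#b'@r)" unfolding pre_def by auto
      have "pre (d#c') y" using y(2) pre_te1[OF c'] by simp
      then have "pre (d#c') (d#b'@r)" using pre_te[OF r] by simp
      then have "pre c' (b'@r)" by (rule pre_cons_cancel)
      then have "pre w' (b'@r)" using w'(3) pre_app by blast
      then have "pre (d#w') (d#b'@r)" by (rule pre_cons)
      then show "pre (d#w') y" using pre_te[OF r] by simp
    qed
  next
    case False
    from Lc[OF pdx Cons.prems(2) False] have comm: "\<forall>l\<in>set c. E d l" and pdc: "pre (d#c) x" by auto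
    have "pre (d#c) (d#b'@r1)" using pdc pre_te[OF r1] by simp
    then have "pre c (b'@r1)" by (rule pre_cons_cancel)
    from Cons.IH[OF pre_app this] obtain w' where w': "pre b' w'" "pre c w'"
      "\<forall>y. pre b' y \<longrightarrow> pre c y \<longrightarrow> pre w' y" by blast
    show ?thesis
    proof (intro exI[of _ "d#w'"] conjI allI impI)
      show "pre (d#b') (d#w')" using pre_cons[OF w'(1)] .
      from w'(2) obtain s where s: "te w' (c@s)" unfolding pre_def by blast
      have t1: "te (d#w') (d#c@s)" using te_cons[OF s] .
      have "te (c@[d]@s) (d#c@s)" using te_app[OF te_commute[OF comm] te_refl[of s]] by simp
      then have "te (d#w') (c@(d#s))" using te_trans[OF t1 te_sym] by simp
      then show "pre c (d#w')" unfolding pre_def by blast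
      fix y assume y: "pre (d#b') y" "pre c y"
      have pdy: "pre [d] y" using pre_trans[OF _ y(1)] pre_app[of "[d]" b'] by simp
      from Lc[OF pdy y(2) False] have pdcy: "pre (d#c) y" by auto
      from y(1) obtain r where r: "te y (d#b'@r)" unfolding pre_def by auto
      have "pre (d#c) (d#b'@r)" using pdcy pre_te[OF r] by simp
      then have "pre c (b'@r)" by (rule pre_cons_cancel)
      then have "pre w' (b'@r)" using w'(3) pre_app by blast
      then have "pre (d#w') (d#b'@r)" by (rule pre_cons)
      then show "pre (d#w') y" using pre_te[OF r] by simp
    qed
  qed
qed

definition suf where "suf u w \<longleftrightarrow> (\<exists>v. te w (v @ u))"

lemma suf_pre: "suf u w \<longleftrightarrow> pre (rev u) (rev w)"
proof
  assume "suf u w"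
  then obtain v where "te w (v@u)" unfolding suf_def by blast
  then have "te (rev w) (rev (v@u))" by (rule te_rev)
  then have "te (rev w) (rev u @ rev v)" by simp
  then show "pre (rev u) (rev w)" unfolding pre_def by blast
next
  assume "pre (rev u) (rev w)"
  then obtain v where "te (rev w) (rev u @ v)" unfolding pre_def by blast
  then have "te (rev w) (rev (rev v @ u))" by simp
  then have "te w (rev v @ u)" using te_rev_iff by blast
  then show "suf u w" unfolding suf_def by blast
qed

lemma suf_set: assumes "suf u w" shows "set u \<subseteq> set w"
proof -
  from assms obtain v where "te w (v@u)" unfolding suf_def by blast
  from te_set[OF this] show ?thesis by auto
qed

lemma lcm_suf: assumes "suf b x" "suf c x"
  shows "\<exists>w. suf b w \<and> suf c w \<and> (\<forall>y. suf b y \<longrightarrow> suf c y \<longrightarrow> suf w y)"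
proof -
  from assms lcm_ex[of "rev b" "rev x" "rev c"] obtain w0 where w0: "pre (rev b) w0" "pre (rev c) w0"
    "\<forall>y. pre (rev b) y \<longrightarrow> pre (rev c) y \<longrightarrow> pre w0 y" unfolding suf_pre by blast
  show ?thesis
  proof (intro exI[of _ "rev w0"] conjI allI impI)
    show "suf b (rev w0)" "suf c (rev w0)" using w0 unfolding suf_pre by auto
    fix y assume "suf b y" "suf c y"
    then show "suf (rev w0) y" using w0(3) unfolding suf_pre by auto
  qed
qed

end


lemma map_eqI: "(\<And>K L. f K = Some L \<longleftrightarrow> g K = Some L) \<Longrightarrow> f = g"
proof (rule ext)
  fix K assume h: "\<And>K L. f K = Some L \<longleftrightarrow> g K = Some L"
  show "f K = g K"
  proof (cases "f K")
    case None
    then show ?thesis using h[of K] by (cases "g K") auto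
  next
    case (Some L)
    then show ?thesis using h[of K L] by auto
  qed
qed

lemma pmult_Some: "pmult f g K = Some N \<longleftrightarrow> (\<exists>L. f K = Some L \<and> g L = Some N)"
  unfolding pmult_def map_comp_def by (auto split: option.splits)

definition injm :: "('a \<rightharpoonup> 'a) \<Rightarrow> bool" where
  "injm f \<longleftrightarrow> (\<forall>K K' L. f K = Some L \<longrightarrow> f K' = Some L \<longrightarrow> K = K')"

lemma pinv_Some: assumes "injm f" shows "pinv f L = Some K \<longleftrightarrow> f K = Some L"
proof
  assume a: "pinv f L = Some K"
  then have r: "L \<in> ran f" unfolding pinv_def by (auto split: if_splits)
  then obtain K0 where K0: "f K0 = Some L" unfolding ran_def by auto
  have "(THE x. f x = Some L) = K0" using K0 assms unfolding injm_def by (intro the_equality) auto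
  then show "f K = Some L" using a r K0 unfolding pinv_def by auto
next
  assume a: "f K = Some L"
  then have r: "L \<in> ran f" unfolding ran_def by auto
  have "(THE x. f x = Some L) = K" using a assms unfolding injm_def by (intro the_equality) auto
  then show "pinv f L = Some K" using r unfolding pinv_def by auto
qed

lemma pmult_empty[simp]: "pmult Map.empty g = Map.empty" "pmult g Map.empty = Map.empty"
  unfolding pmult_def map_comp_def by (auto split: option.splits)

lemma pinv_empty[simp]: "pinv Map.empty = Map.empty"
  unfolding pinv_def by auto

locale pgctx = trctx E for E :: "'v \<Rightarrow> 'v \<Rightarrow> bool" +
  fixes V :: "'v set"
begin

abbreviation cls where "cls \<equiv> gm_class E"
abbreviation DD where "DD \<equiv> graph_monoid V E"

lemma cls_eq: "cls u = cls w \<longleftrightarrow> te u w"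
proof
  assume "cls u = cls w"
  moreover have "w \<in> cls w" unfolding gm_class_def by simp
  ultimately show "te u w" unfolding gm_class_def by auto
next
  assume a: "te u w"
  show "cls u = cls w" unfolding gm_class_def
    using te_trans[OF a] te_trans[OF te_sym[OF a]] by auto
qed

lemma D_iff: "K \<in> DD \<longleftrightarrow> (\<exists>w\<in>lists V. K = cls w)"
  unfolding graph_monoid_def by auto

lemma mult_cls: "gm_mult E (cls u) (cls w) = cls (u@w)"
proof
  show "gm_mult E (cls u) (cls w) \<subseteq> cls (u@w)"
  proof
    fix zs assume "zs \<in> gm_mult E (cls u) (cls w)"
    then obtain xs ys where xs: "te u xs" and ys: "te w ys" and z: "te (xs@ys) zs"
      unfolding gm_mult_def gm_class_def by auto
    have "te (u@w) (xs@ys)" by (rule te_app[OF xs ys])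
    then show "zs \<in> cls (u@w)" using te_trans[OF _ z] unfolding gm_class_def by auto
  qed
next
  show "cls (u@w) \<subseteq> gm_mult E (cls u) (cls w)"
  proof
    fix zs assume "zs \<in> cls (u@w)"
    then have z: "te (u@w) zs" by (simp add: gm_class_def)
    have "u \<in> cls u" "w \<in> cls w" by (simp_all add: gm_class_def)
    then show "zs \<in> gm_mult E (cls u) (cls w)" unfolding gm_mult_def using z by blast
  qed
qed

definition rr :: "'v list \<Rightarrow> 'v list \<Rightarrow> ('v list set \<rightharpoonup> 'v list set)" where
  "rr a b K = (if \<exists>x\<in>lists V. K = cls (x@a)
     then Some (cls ((SOME x. x \<in> lists V \<and> K = cls (x@a)) @ b)) else None)"

lemma rr_Some: "rr a b K = Some L \<longleftrightarrow> (\<exists>x\<in>lists V. K = cls (x@a) \<and> L = cls (x@b))"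
proof
  assume h: "rr a b K = Some L"
  then have ex: "\<exists>x. x\<in>lists V \<and> K = cls (x@a)" unfolding rr_def by (auto split: if_splits)
  let ?x = "SOME x. x \<in> lists V \<and> K = cls (x@a)"
  have "?x \<in> lists V \<and> K = cls (?x@a)" using someI_ex[OF ex] .
  moreover have "L = cls (?x @ b)" using h ex unfolding rr_def by (auto split: if_splits)
  ultimately show "\<exists>x\<in>lists V. K = cls (x@a) \<and> L = cls (x@b)" by blast
next
  assume "\<exists>x\<in>lists V. K = cls (x@a) \<and> L = cls (x@b)"
  then obtain x where x: "x \<in> lists V" "K = cls (x@a)" "L = cls (x@b)" by blast
  then have ex: "\<exists>x. x\<in>lists V \<and> K = cls (x@a)" by blast
  let ?x = "SOME x. x \<in> lists V \<and> K = cls (x@a)"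
  have "?x \<in> lists V \<and> K = cls (?x@a)" using someI_ex[OF ex] .
  then have "cls (?x@a) = cls (x@a)" using x(2) by simp
  then have "te (?x@a) (x@a)" using cls_eq by blast
  then have "te ?x x" by (rule cancel_right)
  then have "te (?x@b) (x@b)" using te_app te_refl by blast
  then have "cls (?x@b) = L" using x(3) cls_eq by simp
  then show "rr a b K = Some L" using ex unfolding rr_def by auto
qed

lemma rr_inj: "injm (rr a b)"
  unfolding injm_def
proof (intro allI impI)
  fix K K' L assume "rr a b K = Some L" "rr a b K' = Some L"
  then obtain x x' where x: "K = cls (x@a)" "L = cls (x@b)" and x': "K' = cls (x'@a)" "L = cls (x'@b)"
    unfolding rr_Some by blast
  then have "cls (x@b) = cls (x'@b)" by simp
  then have "te (x@b) (x'@b)" using cls_eq by blast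
  then have "te x x'" by (rule cancel_right)
  then have "te (x@a) (x'@a)" using te_app te_refl by blast
  then show "K = K'" using x x' cls_eq by simp
qed

lemma rr_self: "a \<in> lists V \<Longrightarrow> rr a b (cls a) = Some (cls b)"
  unfolding rr_Some by (intro bexI[of _ "[]"]) auto

lemma rr_nonempty: "a \<in> lists V \<Longrightarrow> rr a b \<noteq> Map.empty"
  using rr_self[of a b] by (metis option.simps(3))

lemma pinv_rr: "pinv (rr a b) = rr b a"
proof (rule map_eqI)
  fix K L
  show "pinv (rr a b) K = Some L \<longleftrightarrow> rr b a K = Some L"
    unfolding pinv_Some[OF rr_inj] rr_Some by blast
qed

lemma rr_comp: "pmult (rr a []) (rr [] b) = rr a b"
proof (rule map_eqI)
  fix K N
  show "pmult (rr a []) (rr [] b) K = Some N \<longleftrightarrow> rr a b K = Some N"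
  proof
    assume "pmult (rr a []) (rr [] b) K = Some N"
    then obtain L where L1: "rr a [] K = Some L" and L2: "rr [] b L = Some N" unfolding pmult_Some by blast
    from L1 obtain x where x: "x \<in> lists V" "K = cls (x@a)" "L = cls (x@[])" unfolding rr_Some by blast
    from L2 obtain y where y: "L = cls (y@[])" "N = cls (y@b)" unfolding rr_Some by blast
    have "cls x = cls y" using x(3) y(1) by simp
    then have "te x y" using cls_eq by blast
    then have "te (x@b) (y@b)" using te_app[OF _ te_refl] by blast
    then have "cls (x@b) = cls (y@b)" using cls_eq by blast
    then have "N = cls (x@b)" using y(2) by simp
    then show "rr a b K = Some N" unfolding rr_Some using x(1,2) by blast
  next
    assume "rr a b K = Some N"
    then obtain x where x: "x \<in> lists V" "K = cls (x@a)" "N = cls (x@b)" unfolding rr_Some by blast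
    have "rr a [] K = Some (cls x)" unfolding rr_Some using x by (intro bexI[of _ x]) auto
    moreover have "rr [] b (cls x) = Some N" unfolding rr_Some using x by (intro bexI[of _ x]) auto
    ultimately show "pmult (rr a []) (rr [] b) K = Some N" unfolding pmult_Some by blast
  qed
qed

lemma rt_rr: assumes "c \<in> lists V" shows "right_translation DD (gm_mult E) (cls c) = rr [] c"
proof (rule map_eqI)
  fix K L
  show "right_translation DD (gm_mult E) (cls c) K = Some L \<longleftrightarrow> rr [] c K = Some L"
  proof
    assume h: "right_translation DD (gm_mult E) (cls c) K = Some L"
    then have "K \<in> DD" unfolding right_translation_def by (simp split: if_splits)
    then obtain x where x: "x \<in> lists V" "K = cls x" using D_iff by blast
    have "L = gm_mult E K (cls c)" using h \<open>K \<in> DD\<close> unfolding right_translation_def by simp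
    then have "L = cls (x@c)" using x mult_cls by simp
    then show "rr [] c K = Some L" unfolding rr_Some using x by auto
  next
    assume "rr [] c K = Some L"
    then obtain x where x: "x \<in> lists V" "K = cls (x@[])" "L = cls (x@c)" unfolding rr_Some by blast
    then have "K \<in> DD" using D_iff by auto
    moreover have "L = gm_mult E K (cls c)" using x mult_cls by simp
    ultimately show "right_translation DD (gm_mult E) (cls c) K = Some L" unfolding right_translation_def by simp
  qed
qed

lemma pid_rr: "pid DD = rr [] []"
proof (rule map_eqI)
  fix K L
  show "pid DD K = Some L \<longleftrightarrow> rr [] [] K = Some L"
  proof
    assume h: "pid DD K = Some L"
    then have "K \<in> DD" "L = K" unfolding pid_def by (simp_all split: if_splits)
    then obtain x where x: "x \<in> lists V" "K = cls x" using D_iff by blast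
    then show "rr [] [] K = Some L" unfolding rr_Some using \<open>L = K\<close> by auto
  next
    assume "rr [] [] K = Some L"
    then obtain x where x: "x \<in> lists V" "K = cls (x@[])" "L = cls (x@[])" unfolding rr_Some by blast
    then have "K \<in> DD" using D_iff by auto
    then show "pid DD K = Some L" unfolding pid_def using x by simp
  qed
qed

lemma rr_mult:
  assumes "b \<in> lists V" "c \<in> lists V"
  shows "pmult (rr a b) (rr c d) = Map.empty \<or>
    (\<exists>u v. u \<in> lists V \<and> v \<in> lists V \<and> te (u@b) (v@c) \<and> pmult (rr a b) (rr c d) = rr (u@a) (v@d))"
proof (cases "\<exists>x\<in>lists V. \<exists>y\<in>lists V. te (x@b) (y@c)")
  case False
  have "pmult (rr a b) (rr c d) K = None" for K
  proof (rule ccontr)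
    assume "pmult (rr a b) (rr c d) K \<noteq> None"
    then obtain N where "pmult (rr a b) (rr c d) K = Some N" by auto
    then obtain L where "rr a b K = Some L" "rr c d L = Some N" unfolding pmult_Some by blast
    then obtain x y where "x \<in> lists V" "L = cls (x@b)" "y \<in> lists V" "L = cls (y@c)"
      unfolding rr_Some by blast
    moreover have "cls (x@b) = cls (y@c)" using calculation by simp
    then have "te (x@b) (y@c)" using cls_eq by blast
    ultimately show False using False by blast
  qed
  then show ?thesis by auto
next
  case True
  then obtain x y where xy: "x \<in> lists V" "y \<in> lists V" "te (x@b) (y@c)" by blast
  have "suf b (x@b)" unfolding suf_def by (rule exI[of _ x]) simp
  moreover have "suf c (x@b)" using xy(3) unfolding suf_def by blast
  ultimately obtain w where w: "suf b w" "suf c w" "\<forall>z. suf b z \<longrightarrow> suf c z \<longrightarrow> suf w z"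
    using lcm_suf by blast
  have "suf w (x@b)" using w(3) \<open>suf b (x@b)\<close> \<open>suf c (x@b)\<close> by blast
  then have wV: "set w \<subseteq> V" using suf_set xy(1) assms(1) by fastforce
  from w(1) obtain u where u: "te w (u@b)" unfolding suf_def by blast
  from w(2) obtain v where v: "te w (v@c)" unfolding suf_def by blast
  have uV: "u \<in> lists V" using te_set[OF u] wV by auto
  have vV: "v \<in> lists V" using te_set[OF v] wV by auto
  have uv: "te (u@b) (v@c)" using te_trans[OF te_sym[OF u] v] .
  have "pmult (rr a b) (rr c d) = rr (u@a) (v@d)"
  proof (rule map_eqI)
    fix K N
    show "pmult (rr a b) (rr c d) K = Some N \<longleftrightarrow> rr (u@a) (v@d) K = Some N"
    proof
      assume "pmult (rr a b) (rr c d) K = Some N"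
      then obtain L where "rr a b K = Some L" "rr c d L = Some N" unfolding pmult_Some by blast
      then obtain x1 y1 where x1: "x1 \<in> lists V" "K = cls (x1@a)" "L = cls (x1@b)"
        and y1: "y1 \<in> lists V" "L = cls (y1@c)" "N = cls (y1@d)" unfolding rr_Some by blast
      have "cls (x1@b) = cls (y1@c)" using x1(3) y1(2) by simp
      then have e: "te (x1@b) (y1@c)" using cls_eq by blast
      have "suf b (x1@b)" unfolding suf_def by (rule exI[of _ x1]) simp
      moreover have "suf c (x1@b)" using e unfolding suf_def by blast
      ultimately have "suf w (x1@b)" using w(3) by blast
      then obtain s where s: "te (x1@b) (s@w)" unfolding suf_def by blast
      have sV: "s \<in> lists V" using te_set[OF s] x1(1) assms(1) by auto
      have "te (s@w) (s@u@b)" using te_app[OF te_refl u] .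
      then have "te (x1@b) ((s@u)@b)" using te_trans[OF s] by simp
      then have "te x1 (s@u)" by (rule cancel_right)
      then have "te (x1@a) (s@(u@a))" using te_app[OF _ te_refl] by fastforce
      then have K: "K = cls (s@(u@a))" using x1(2) cls_eq by simp
      have "te (s@w) (s@v@c)" using te_app[OF te_refl v] .
      then have "te (y1@c) ((s@v)@c)" using te_trans[OF te_sym[OF e] s] te_trans by simp
      then have "te y1 (s@v)" by (rule cancel_right)
      then have "te (y1@d) (s@(v@d))" using te_app[OF _ te_refl] by fastforce
      then have "N = cls (s@(v@d))" using y1(3) cls_eq by simp
      then show "rr (u@a) (v@d) K = Some N" unfolding rr_Some using K sV by blast
    next
      assume "rr (u@a) (v@d) K = Some N"
      then obtain s where s: "s \<in> lists V" "K = cls (s@u@a)" "N = cls (s@v@d)" unfolding rr_Some by auto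
      have "rr a b K = Some (cls ((s@u)@b))" unfolding rr_Some using s uV by (intro bexI[of _ "s@u"]) auto
      moreover have "cls ((s@u)@b) = cls ((s@v)@c)" using cls_eq te_app[OF te_refl uv, of s] by simp
      moreover have "rr c d (cls ((s@v)@c)) = Some N" unfolding rr_Some using s vV by (intro bexI[of _ "s@v"]) auto
      ultimately show "pmult (rr a b) (rr c d) K = Some N" unfolding pmult_Some by auto
    qed
  qed
  then show ?thesis using uV vV uv by blast
qed

abbreviation S0 where "S0 \<equiv> inverse_hull DD (gm_mult E)"
abbreviation SS where "SS \<equiv> polygraph_monoid V E"

lemma S0_struct: "f \<in> S0 \<Longrightarrow> f = Map.empty \<or> (\<exists>a b. a \<in> lists V \<and> b \<in> lists V \<and> f = rr a b)"
  unfolding inverse_hull_def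
proof (induction rule: inv_submonoid_gen.induct)
  case gen_id
  then show ?case using pid_rr by auto
next
  case (gen_gen f)
  then obtain K0 where "K0 \<in> DD" "f = right_translation DD (gm_mult E) K0" by auto
  then obtain c where "c \<in> lists V" "f = right_translation DD (gm_mult E) (cls c)" using D_iff by auto
  then show ?case using rt_rr by auto
next
  case (gen_mult f g)
  show ?case
  proof (cases "f = Map.empty \<or> g = Map.empty")
    case True then show ?thesis by auto
  next
    case False
    then obtain a b c d where abcd: "a \<in> lists V" "b \<in> lists V" "c \<in> lists V" "d \<in> lists V"
      "f = rr a b" "g = rr c d" using gen_mult.IH by blast
    have "pmult f g = Map.empty \<or> (\<exists>u v. u \<in> lists V \<and> v \<in> lists V \<and> te (u@b) (v@c) \<and> pmult f g = rr (u@a) (v@d))"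
      using rr_mult[OF abcd(2,3), of a d] abcd(5,6) by simp
    then show ?thesis
    proof
      assume "pmult f g = Map.empty" then show ?thesis by simp
    next
      assume "\<exists>u v. u \<in> lists V \<and> v \<in> lists V \<and> te (u@b) (v@c) \<and> pmult f g = rr (u@a) (v@d)"
      then obtain u v where "u \<in> lists V" "v \<in> lists V" "pmult f g = rr (u@a) (v@d)" by blast
      then show ?thesis using abcd(1,4) by (intro disjI2 exI[of _ "u@a"] exI[of _ "v@d"]) auto
    qed
  qed
next
  case (gen_inv f)
  then show ?case using pinv_rr by auto
qed

lemma rr_S0: assumes "a \<in> lists V" "b \<in> lists V" shows "rr a b \<in> S0"
proof -
  have "cls a \<in> DD" "cls b \<in> DD" using assms D_iff by auto
  then have "right_translation DD (gm_mult E) (cls a) \<in> S0" "right_translation DD (gm_mult E) (cls b) \<in> S0"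
    unfolding inverse_hull_def by (auto intro: inv_submonoid_gen.gen_gen)
  then have "rr [] a \<in> S0" "rr [] b \<in> S0" using rt_rr assms by auto
  then have "pmult (pinv (rr [] a)) (rr [] b) \<in> S0"
    unfolding inverse_hull_def by (auto intro: inv_submonoid_gen.gen_mult inv_submonoid_gen.gen_inv)
  then show ?thesis using pinv_rr rr_comp by simp
qed

lemma SS_def2: "SS = insert Map.empty S0"
  unfolding polygraph_monoid_def inverse_hull0_def by simp

lemma SS_struct: "f \<in> SS \<Longrightarrow> f = Map.empty \<or> (\<exists>a b. a \<in> lists V \<and> b \<in> lists V \<and> f = rr a b)"
  using S0_struct SS_def2 by auto

lemma SS_rr: "a \<in> lists V \<Longrightarrow> b \<in> lists V \<Longrightarrow> rr a b \<in> SS"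
  using rr_S0 SS_def2 by auto

lemma SS_empty: "Map.empty \<in> SS" using SS_def2 by auto

lemma SS_injm: "f \<in> SS \<Longrightarrow> injm f"
  using SS_struct rr_inj unfolding injm_def by fastforce

lemma SS_mult: "f \<in> SS \<Longrightarrow> g \<in> SS \<Longrightarrow> pmult f g \<in> SS"
  unfolding SS_def2 inverse_hull_def by (auto intro: inv_submonoid_gen.gen_mult)

lemma SS_inv: "f \<in> SS \<Longrightarrow> pinv f \<in> SS"
  unfolding SS_def2 inverse_hull_def by (auto intro: inv_submonoid_gen.gen_inv)

lemma is_zero_iff: "f \<in> SS \<Longrightarrow> is_zero SS pmult f \<longleftrightarrow> f = Map.empty"
proof
  assume f: "f \<in> SS" and z: "is_zero SS pmult f"
  then have "pmult f Map.empty = f" using SS_empty unfolding is_zero_def by blast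
  then show "f = Map.empty" by simp
next
  assume "f \<in> SS" "f = Map.empty"
  then show "is_zero SS pmult f" unfolding is_zero_def by auto
qed

end


context pgctx begin

lemma natle_imp: assumes "h \<in> SS" "nat_le SS pmult f h" shows "f \<subseteq>\<^sub>m h"
proof -
  from assms(2) obtain e where e: "e \<in> SS" "pmult e e = e" "f = pmult e h" unfolding nat_le_def by blast
  have ie: "injm e" using SS_injm[OF e(1)] .
  show ?thesis unfolding map_le_def
  proof
    fix K assume "K \<in> dom f"
    then obtain N where N: "f K = Some N" by auto
    then obtain L where L: "e K = Some L" "h L = Some N" using e(3) pmult_Some by metis
    have "pmult e e K = Some L" using e(2) L(1) by simp
    then obtain L' where L': "e K = Some L'" "e L' = Some L" unfolding pmult_Some by blast
    have "L' = L" using L'(1) L(1) by simp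
    then have "e L = Some L" using L'(2) by simp
    then have "K = L" using ie L(1) unfolding injm_def by blast
    then show "f K = h K" using N L(2) by simp
  qed
qed

lemma e_Some: assumes "injm f" shows "pmult f (pinv f) K = Some K' \<longleftrightarrow> (K' = K \<and> K \<in> dom f)"
proof
  assume "pmult f (pinv f) K = Some K'"
  then obtain L where "f K = Some L" "pinv f L = Some K'" unfolding pmult_Some by blast
  moreover then have "f K' = Some L" using pinv_Some[OF assms] by blast
  ultimately show "K' = K \<and> K \<in> dom f" using assms unfolding injm_def by blast
next
  assume "K' = K \<and> K \<in> dom f"
  then obtain L where "f K = Some L" "K' = K" by auto
  moreover then have "pinv f L = Some K" using pinv_Some[OF assms] by blast
  ultimately show "pmult f (pinv f) K = Some K'" unfolding pmult_Some by blast
qed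

lemma le_natle: assumes "f \<in> SS" "h \<in> SS" "f \<subseteq>\<^sub>m h" shows "nat_le SS pmult f h"
proof -
  have inf: "injm f" using SS_injm[OF assms(1)] .
  let ?e = "pmult f (pinv f)"
  have eS: "?e \<in> SS" using SS_mult[OF assms(1) SS_inv[OF assms(1)]] .
  have idem: "pmult ?e ?e = ?e"
  proof (rule map_eqI)
    fix K K'
    have "pmult ?e ?e K = Some K' \<longleftrightarrow> (\<exists>L. ?e K = Some L \<and> ?e L = Some K')" by (rule pmult_Some)
    also have "\<dots> \<longleftrightarrow> ?e K = Some K'" unfolding e_Some[OF inf] by auto
    finally show "pmult ?e ?e K = Some K' \<longleftrightarrow> ?e K = Some K'" .
  qed
  have "pmult ?e h = f"
  proof (rule map_eqI)
    fix K N
    show "pmult ?e h K = Some N \<longleftrightarrow> f K = Some N"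
    proof
      assume "pmult ?e h K = Some N"
      then have "K \<in> dom f" "h K = Some N" unfolding pmult_Some[of ?e h] e_Some[OF inf] by auto
      then show "f K = Some N" using assms(3) unfolding map_le_def by auto
    next
      assume a: "f K = Some N"
      then have "h K = Some N" using assms(3) unfolding map_le_def by (metis domIff option.simps(3))
      then show "pmult ?e h K = Some N" unfolding pmult_Some[of ?e h] e_Some[OF inf] using a by auto
    qed
  qed
  then show ?thesis unfolding nat_le_def using eS idem by metis
qed

lemma rr_le: assumes "a \<in> lists V"
  shows "rr a b \<subseteq>\<^sub>m rr c d \<longleftrightarrow> (\<exists>z\<in>lists V. te a (z@c) \<and> te b (z@d))"
proof
  assume h: "rr a b \<subseteq>\<^sub>m rr c d"
  have "rr a b (cls a) = Some (cls b)" using rr_self[OF assms] .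
  then have "rr c d (cls a) = Some (cls b)" using h unfolding map_le_def by (metis domIff option.simps(3))
  then obtain x where x: "x \<in> lists V" "cls a = cls (x@c)" "cls b = cls (x@d)" unfolding rr_Some by blast
  then show "\<exists>z\<in>lists V. te a (z@c) \<and> te b (z@d)" using cls_eq by blast
next
  assume "\<exists>z\<in>lists V. te a (z@c) \<and> te b (z@d)"
  then obtain z where z: "z \<in> lists V" "te a (z@c)" "te b (z@d)" by blast
  show "rr a b \<subseteq>\<^sub>m rr c d" unfolding map_le_def
  proof
    fix K assume "K \<in> dom (rr a b)"
    then obtain L where L: "rr a b K = Some L" by auto
    then obtain x where x: "x \<in> lists V" "K = cls (x@a)" "L = cls (x@b)" unfolding rr_Some by blast
    have "te (x@a) ((x@z)@c)" using te_app[OF te_refl z(2), of x] by simp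
    then have "K = cls ((x@z)@c)" using x(2) cls_eq by blast
    moreover have "te (x@b) ((x@z)@d)" using te_app[OF te_refl z(3), of x] by simp
    then have "L = cls ((x@z)@d)" using x(3) cls_eq by blast
    moreover have "x@z \<in> lists V" using x(1) z(1) by simp
    ultimately have "rr c d K = Some L" unfolding rr_Some by blast
    then show "rr a b K = rr c d K" using L by simp
  qed
qed

lemma Fstar: "F_star_inverse SS pmult"
  unfolding F_star_inverse_def
proof (intro ballI impI)
  fix f assume fS: "f \<in> SS" and nz: "\<not> is_zero SS pmult f"
  then have "f \<noteq> Map.empty" using is_zero_iff by blast
  then obtain a b where ab: "a \<in> lists V" "b \<in> lists V" "f = rr a b" using SS_struct[OF fS] by blast
  obtain g where g: "pre g a" "pre g b" "\<forall>h. pre h a \<longrightarrow> pre h b \<longrightarrow> pre h g" using gcd_ex by blast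
  from g(1) obtain a' where a': "te a (g@a')" unfolding pre_def by blast
  from g(2) obtain b' where b': "te b (g@b')" unfolding pre_def by blast
  have gV: "g \<in> lists V" using pre_set[OF g(1)] ab(1) by auto
  have a'V: "a' \<in> lists V" using te_set[OF a'] ab(1) by auto
  have b'V: "b' \<in> lists V" using te_set[OF b'] ab(2) by auto
  let ?m = "rr a' b'"
  have key: "rr c d \<subseteq>\<^sub>m ?m" if cd: "c \<in> lists V" "d \<in> lists V" "f \<subseteq>\<^sub>m rr c d" for c d
  proof -
    from cd(3) ab obtain z where z: "z \<in> lists V" "te a (z@c)" "te b (z@d)" using rr_le by blast
    have "pre z a" "pre z b" using z unfolding pre_def by blast+
    then have "pre z g" using g(3) by blast
    then obtain z' where z': "te g (z@z')" unfolding pre_def by blast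
    have z'V: "z' \<in> lists V" using te_set[OF z'] gV by auto
    have "te (g@a') (z@z'@a')" using te_app[OF z' te_refl] by simp
    then have "te (z@c) (z@(z'@a'))" using te_trans[OF te_sym[OF z(2)] te_trans[OF a']] by simp
    then have c: "te c (z'@a')" by (rule cancel_left)
    have "te (g@b') (z@z'@b')" using te_app[OF z' te_refl] by simp
    then have "te (z@d) (z@(z'@b'))" using te_trans[OF te_sym[OF z(3)] te_trans[OF b']] by simp
    then have d: "te d (z'@b')" by (rule cancel_left)
    show ?thesis using rr_le[OF cd(1)] c d z'V by blast
  qed
  have fm: "f \<subseteq>\<^sub>m ?m" using rr_le[OF ab(1)] ab(3) gV a' b' by blast
  have mS: "?m \<in> SS" using SS_rr[OF a'V b'V] .
  have fa: "f (cls a) \<noteq> None" using rr_self[OF ab(1)] ab(3) by simp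
  show "\<exists>!m. m \<in> SS \<and> nat_le SS pmult f m \<and> (\<forall>n\<in>SS. nat_le SS pmult m n \<longrightarrow> n = m)"
  proof (rule ex1I[of _ ?m], intro conjI ballI impI)
    show "?m \<in> SS" using mS .
    show "nat_le SS pmult f ?m" using le_natle[OF fS mS fm] .
    fix n assume nS: "n \<in> SS" and mn: "nat_le SS pmult ?m n"
    have mn': "?m \<subseteq>\<^sub>m n" using natle_imp[OF nS mn] .
    have fn: "f \<subseteq>\<^sub>m n" using map_le_trans[OF fm mn'] .
    have "n \<noteq> Map.empty" using fn fa unfolding map_le_def by (metis domIff)
    then obtain c d where cd: "c \<in> lists V" "d \<in> lists V" "n = rr c d" using SS_struct[OF nS] by blast
    have "n \<subseteq>\<^sub>m ?m" using key[OF cd(1,2)] fn cd(3) by simp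
    then show "n = ?m" using mn' map_le_antisym by blast
  next
    fix m2 assume h: "m2 \<in> SS \<and> nat_le SS pmult f m2 \<and> (\<forall>n\<in>SS. nat_le SS pmult m2 n \<longrightarrow> n = m2)"
    then have fm2: "f \<subseteq>\<^sub>m m2" using natle_imp by blast
    have "m2 \<noteq> Map.empty" using fm2 fa unfolding map_le_def by (metis domIff)
    then obtain c d where cd: "c \<in> lists V" "d \<in> lists V" "m2 = rr c d" using SS_struct h by blast
    have "m2 \<subseteq>\<^sub>m ?m" using key[OF cd(1,2)] fm2 cd(3) by simp
    then have "nat_le SS pmult m2 ?m" using le_natle h mS by blast
    then show "m2 = ?m" using h mS by blast
  qed
qed

end


definition flp :: "'v \<times> bool \<Rightarrow> 'v \<times> bool" where "flp l = (fst l, \<not> snd l)"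

lemma flp_flp[simp]: "flp (flp l) = l" by (simp add: flp_def)

fun red :: "('v \<times> bool) list \<Rightarrow> bool" where
  "red [] = True"
| "red [x] = True"
| "red (x#y#r) = (y \<noteq> flp x \<and> red (y#r))"

lemma red_tl: "red (x#r) \<Longrightarrow> red r"
  by (cases r) auto

definition lam :: "'v \<times> bool \<Rightarrow> ('v \<times> bool) list \<Rightarrow> ('v \<times> bool) list" where
  "lam l r = (case r of [] \<Rightarrow> [l] | x#r' \<Rightarrow> if x = flp l then r' else l#r)"

lemma red_lam: "red r \<Longrightarrow> red (lam l r)"
  by (cases r) (auto simp: lam_def dest: red_tl)

lemma lam_inv: "red r \<Longrightarrow> lam (flp l) (lam l r) = r"
proof (cases r)
  case Nil then show ?thesis by (simp add: lam_def)
next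
  case (Cons x r')
  assume rr: "red r"
  show ?thesis
  proof (cases "x = flp l")
    case True
    show ?thesis
    proof (cases r')
      case Nil then show ?thesis using Cons True by (simp add: lam_def)
    next
      case (Cons y r'')
      then have "y \<noteq> l" using rr \<open>r = x#r'\<close> True by auto
      then show ?thesis using Cons \<open>r = x#r'\<close> True by (simp add: lam_def)
    qed
  next
    case False
    then show ?thesis using Cons by (simp add: lam_def)
  qed
qed

definition sg :: "'v \<times> bool \<Rightarrow> ('v \<times> bool) list \<Rightarrow> ('v \<times> bool) list" where
  "sg l r = (if red r then lam l r else r)"

lemma sg_inv: "sg (flp l) (sg l r) = r"
  by (simp add: sg_def red_lam lam_inv)

lemma red_pos: "red (map (\<lambda>v. (v, True)) q)"
proof (induction q)
  case Nil then show ?case by simp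
next
  case (Cons a q) then show ?case by (cases q) (auto simp: flp_def)
qed

lemma sg_pos: "sg (v, True) (map (\<lambda>v. (v, True)) q) = (v, True) # map (\<lambda>v. (v, True)) q"
  using red_pos[of q] by (cases q) (auto simp: sg_def lam_def flp_def)

lemma bij_by_inv: "(\<And>x. g (f x) = x) \<Longrightarrow> (\<And>y. f (g y) = y) \<Longrightarrow> bij f"
  unfolding bij_def inj_def surj_def by metis

type_synonym 'v xx = "('v \<times> 'v) \<times> ('v \<times> bool) list"

definition el :: "'v \<Rightarrow> 'v \<Rightarrow> ('v \<times> bool) list \<Rightarrow> nat \<Rightarrow> 'v list" where
  "el s t r i = [s,t] @ replicate (Suc (2*i + (if snd (r!i) then 1 else 0))) (fst (r!i))"

definition enc :: "'v xx \<Rightarrow> 'v list set" where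
  "enc x = (case x of ((s,t),r) \<Rightarrow> insert [s,t] (el s t r ` {..<length r}))"

lemma length_el: "length (el s t r i) = 3 + 2*i + (if snd (r!i) then 1 else 0)"
  by (simp add: el_def)

lemma el_eq: assumes "el s t r i = el s t r' j" shows "i = j \<and> r!i = r'!j"
proof -
  have l: "2*i + (if snd (r!i) then 1 else 0) = 2*j + (if snd (r'!j) then 1 else 0)"
    using arg_cong[OF assms, of length] by (simp add: length_el)
  then have ij: "i = j" by (auto split: if_splits)
  then have b: "snd (r!i) = snd (r'!j)" using l by (auto split: if_splits)
  have "drop 2 (el s t r i) = drop 2 (el s t r' j)" using assms by simp
  then have "replicate (Suc (2*i + (if snd (r!i) then 1 else 0))) (fst (r!i)) =
             replicate (Suc (2*i + (if snd (r!i) then 1 else 0))) (fst (r'!j))"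
    using ij b by (simp add: el_def)
  then have "fst (r!i) = fst (r'!j)" by simp
  with b ij show ?thesis by (simp add: prod_eq_iff)
qed

lemma enc_sub: assumes "enc ((s,t),r) \<subseteq> enc ((s',t'),r')"
  shows "s = s' \<and> t = t' \<and> length r \<le> length r' \<and> (\<forall>i<length r. r!i = r'!i)"
proof -
  have "[s,t] \<in> enc ((s',t'),r')" using assms by (auto simp: enc_def)
  then have st: "[s,t] = [s',t'] \<or> (\<exists>j<length r'. [s,t] = el s' t' r' j)" by (auto simp: enc_def)
  have "\<not> (\<exists>j<length r'. [s,t] = el s' t' r' j)"
  proof
    assume "\<exists>j<length r'. [s,t] = el s' t' r' j"
    then obtain j where "[s,t] = el s' t' r' j" by blast
    then have "length [s,t] = length (el s' t' r' j)" by simp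
    then show False by (simp add: length_el)
  qed
  with st have st': "s = s'" "t = t'" by auto
  have m: "i < length r' \<and> r!i = r'!i" if i: "i < length r" for i
  proof -
    have "el s t r i \<in> enc ((s',t'),r')" using assms i by (auto simp: enc_def)
    then have "el s t r i = [s,t] \<or> (\<exists>j<length r'. el s t r i = el s t r' j)" using st' by (auto simp: enc_def)
    moreover have "el s t r i \<noteq> [s,t]"
    proof
      assume "el s t r i = [s,t]"
      then have "length (el s t r i) = 2" by simp
      then show False by (simp add: length_el)
    qed
    ultimately obtain j where j: "j < length r'" "el s t r i = el s t r' j" by blast
    from el_eq[OF j(2)] j(1) show ?thesis by auto
  qed
  have "length r \<le> length r'"
  proof (rule ccontr)
    assume "\<not> length r \<le> length r'"
    then have "length r' < length r" by simp
    then show False using m[of "length r'"] by simp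
  qed
  with st' m show ?thesis by blast
qed

lemma inj_enc: "inj enc"
proof (rule injI)
  fix x y :: "'v xx" assume h: "enc x = enc y"
  obtain s t r where x: "x = ((s,t),r)" by (metis prod.collapse)
  obtain s' t' r' where y: "y = ((s',t'),r')" by (metis prod.collapse)
  have a: "s = s' \<and> t = t' \<and> length r \<le> length r' \<and> (\<forall>i<length r. r!i = r'!i)"
    using enc_sub[of s t r s' t' r'] h x y by simp
  have b: "length r' \<le> length r"
    using enc_sub[of s' t' r' s t r] h x y by simp
  have "r = r'" using a b by (intro nth_equalityI) auto
  then show "x = y" using a x y by simp
qed

definition pm :: "('v xx \<Rightarrow> 'v xx) \<Rightarrow> ('v list set \<rightharpoonup> 'v list set)" where
  "pm f = (\<lambda>K. if K \<in> range enc then Some (enc (f (inv_into UNIV enc K))) else None)"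

definition dp :: "('v list set \<rightharpoonup> 'v list set) list \<Rightarrow> ('v xx \<Rightarrow> 'v xx)" where
  "dp l = (\<lambda>x. inv_into UNIV enc (the (hd l (enc x))))"

lemma dp_pm[simp]: "dp [pm f] = f"
  by (rule ext) (simp add: dp_def pm_def inj_enc)

definition Gr :: "('v list set \<rightharpoonup> 'v list set) list monoid" where
  "Gr = \<lparr>carrier = (\<lambda>f. [pm f]) ` {f. bij f}, mult = (\<lambda>x y. [pm (dp x \<circ> dp y)]), one = [pm id]\<rparr>"

lemma Gr_simps: "carrier Gr = (\<lambda>f. [pm f]) ` {f. bij f}" "x \<otimes>\<^bsub>Gr\<^esub> y = [pm (dp x \<circ> dp y)]" "\<one>\<^bsub>Gr\<^esub> = [pm id]"
  by (simp_all add: Gr_def)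

lemma group_Gr: "group (Gr :: ('v list set \<rightharpoonup> 'v list set) list monoid)"
proof (rule groupI)
  fix x y :: "('v list set \<rightharpoonup> 'v list set) list" assume "x \<in> carrier Gr" "y \<in> carrier Gr"
  then obtain f g where "bij f" "bij g" "x = [pm f]" "y = [pm g]" unfolding Gr_simps by blast
  then show "x \<otimes>\<^bsub>Gr\<^esub> y \<in> carrier Gr" unfolding Gr_simps using bij_comp by fastforce
next
  show "\<one>\<^bsub>Gr\<^esub> \<in> carrier Gr" unfolding Gr_simps by auto
next
  fix x y z :: "('v list set \<rightharpoonup> 'v list set) list" assume "x \<in> carrier Gr" "y \<in> carrier Gr" "z \<in> carrier Gr"
  show "x \<otimes>\<^bsub>Gr\<^esub> y \<otimes>\<^bsub>Gr\<^esub> z = x \<otimes>\<^bsub>Gr\<^esub> (y \<otimes>\<^bsub>Gr\<^esub> z)" unfolding Gr_simps by (simp add: o_assoc)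
next
  fix x :: "('v list set \<rightharpoonup> 'v list set) list" assume "x \<in> carrier Gr"
  then obtain f where "bij f" "x = [pm f]" unfolding Gr_simps by blast
  then show "\<one>\<^bsub>Gr\<^esub> \<otimes>\<^bsub>Gr\<^esub> x = x" unfolding Gr_simps by simp
next
  fix x :: "('v list set \<rightharpoonup> 'v list set) list" assume "x \<in> carrier Gr"
  then obtain f where f: "bij f" "x = [pm f]" unfolding Gr_simps by blast
  show "\<exists>y\<in>carrier Gr. y \<otimes>\<^bsub>Gr\<^esub> x = \<one>\<^bsub>Gr\<^esub>"
  proof (rule bexI[of _ "[pm (inv_into UNIV f)]"])
    show "[pm (inv_into UNIV f)] \<otimes>\<^bsub>Gr\<^esub> x = \<one>\<^bsub>Gr\<^esub>" unfolding Gr_simps using f by (simp add: bij_is_inj)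
    show "[pm (inv_into UNIV f)] \<in> carrier Gr" unfolding Gr_simps using f bij_imp_bij_inv by blast
  qed
qed

context trctx begin

definition act :: "'v \<Rightarrow> bool \<Rightarrow> 'v xx \<Rightarrow> 'v xx" where
  "act v b x = (fst x, if (v = fst (fst x) \<or> v = snd (fst x)) \<and> \<not> E (fst (fst x)) (snd (fst x))
      then sg (v, b) (snd x) else snd x)"

lemma act_inv: "act v False (act v True x) = x"
  using sg_inv[of "(v,True)"] by (simp add: act_def flp_def)
lemma act_inv2: "act v True (act v False x) = x"
  using sg_inv[of "(v,False)"] by (simp add: act_def flp_def)

lemma act_comm: assumes "E a b" shows "act a True \<circ> act b True = act b True \<circ> act a True"
proof (rule ext)
  fix x :: "'v xx"
  obtain s t r where x: "x = ((s,t),r)" by (metis prod.collapse)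
  have "\<not> ((a = s \<or> a = t) \<and> (b = s \<or> b = t) \<and> \<not> E s t)"
    using assms irr symm by blast
  then show "(act a True \<circ> act b True) x = (act b True \<circ> act a True) x"
    using x by (auto simp: act_def)
qed

definition Lam :: "'v list \<Rightarrow> 'v xx \<Rightarrow> 'v xx" where
  "Lam w = foldr (\<lambda>v f. act v True \<circ> f) w id"

lemma Lam_simps[simp]: "Lam [] = id" "Lam (v#w) = act v True \<circ> Lam w"
  by (simp_all add: Lam_def)

lemma Lam_app: "Lam (u@w) = Lam u \<circ> Lam w"
  by (induction u) (auto simp: o_assoc)

lemma bij_Lam: "bij (Lam w)"
proof (induction w)
  case Nil then show ?case using bij_id by (simp add: id_def)
next
  case (Cons v w)
  have "bij (act v True)" using act_inv act_inv2 by (intro bij_by_inv) 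
  then have "bij (act v True \<circ> Lam w)" using Cons bij_comp by blast
  then show ?case by (simp only: Lam_simps(2))
qed

lemma Lam_step: "trace_step E xs ys \<Longrightarrow> Lam xs = Lam ys"
  unfolding trace_step_def
proof (elim exE conjE)
  fix us a b ws assume h: "E a b" "xs = us @ [a, b] @ ws" "ys = us @ [b, a] @ ws"
  have "Lam [a,b] = Lam [b,a]" using act_comm[OF h(1)] by (simp add: o_assoc)
  then show "Lam xs = Lam ys" using h by (simp only: Lam_app)
qed

lemma Lam_te: "te xs ys \<Longrightarrow> Lam xs = Lam ys"
  unfolding trace_eq_def
  by (induction rule: rtranclp_induct) (auto dest: Lam_step)

lemma Lam_base: assumes "\<not> E s t"
  shows "Lam w ((s,t), []) = ((s,t), map (\<lambda>v. (v, True)) (proj s t w))"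
proof (induction w)
  case Nil then show ?case by simp
next
  case (Cons v w)
  then show ?case using assms sg_pos by (auto simp: act_def)
qed

lemma Lam_inj: assumes "Lam u = Lam w" shows "te u w"
proof (rule proj_eq)
  fix s t assume st: "\<not> E s t"
  have "map (\<lambda>v. (v, True)) (proj s t u) = map (\<lambda>v. (v, True)) (proj s t w)"
    using Lam_base[OF st, of u] Lam_base[OF st, of w] assms by simp
  then have "map fst (map (\<lambda>v. (v, True)) (proj s t u)) = map fst (map (\<lambda>v. (v, True)) (proj s t w))" by simp
  then show "proj s t u = proj s t w" by (simp add: o_def)
qed

definition iota :: "'v list \<Rightarrow> ('v list set \<rightharpoonup> 'v list set) list" where
  "iota w = [pm (Lam w)]"

lemma iota_carrier: "iota w \<in> carrier Gr"
  unfolding iota_def Gr_simps using bij_Lam by blast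

lemma iota_app: "iota (u@w) = iota u \<otimes>\<^bsub>Gr\<^esub> iota w"
  unfolding iota_def Gr_simps by (simp add: Lam_app)

lemma iota_eq: "iota u = iota w \<longleftrightarrow> te u w"
proof
  assume "iota u = iota w"
  then have "dp (iota u) = dp (iota w)" by simp
  then show "te u w" unfolding iota_def using Lam_inj by simp
next
  assume "te u w" then show "iota u = iota w" unfolding iota_def using Lam_te by simp
qed

end



lemma (in group) cancel_mid:
  assumes "a \<in> carrier G" "b \<in> carrier G" "c \<in> carrier G"
  shows "inv (a \<otimes> b) \<otimes> (a \<otimes> c) = inv b \<otimes> c"
proof -
  have e: "inv a \<otimes> (a \<otimes> c) = c" using assms by (simp add: m_assoc[symmetric])
  have "inv (a \<otimes> b) \<otimes> (a \<otimes> c) = (inv b \<otimes> inv a) \<otimes> (a \<otimes> c)" using assms by (simp add: inv_mult_group)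
  also have "\<dots> = inv b \<otimes> (inv a \<otimes> (a \<otimes> c))" using assms by (simp add: m_assoc)
  also have "\<dots> = inv b \<otimes> c" using e by simp
  finally show ?thesis .
qed

lemma (in group) cancel_mid2:
  assumes "a \<in> carrier G" "b \<in> carrier G" "c \<in> carrier G"
  shows "(inv a \<otimes> b) \<otimes> (inv b \<otimes> c) = inv a \<otimes> c"
proof -
  have e: "b \<otimes> (inv b \<otimes> c) = c" using assms by (simp add: m_assoc[symmetric])
  have "(inv a \<otimes> b) \<otimes> (inv b \<otimes> c) = inv a \<otimes> (b \<otimes> (inv b \<otimes> c))" using assms by (simp add: m_assoc)
  also have "\<dots> = inv a \<otimes> c" using e by simp
  finally show ?thesis .
qed

context pgctx begin

definition th :: "('v list set \<rightharpoonup> 'v list set) \<Rightarrow> ('v list set \<rightharpoonup> 'v list set) list option" where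
  "th f = (if f = Map.empty then None else
     Some (let p = (SOME p. fst p \<in> lists V \<and> snd p \<in> lists V \<and> f = rr (fst p) (snd p))
           in inv\<^bsub>Gr\<^esub> (iota (fst p)) \<otimes>\<^bsub>Gr\<^esub> iota (snd p)))"

lemma th_pair: assumes "f \<in> SS" "f K = Some L" "K = cls x" "L = cls y"
  shows "th f = Some (inv\<^bsub>Gr\<^esub> (iota x) \<otimes>\<^bsub>Gr\<^esub> iota y)"
proof -
  interpret G: group Gr by (rule group_Gr)
  have ne: "f \<noteq> Map.empty" using assms(2) by auto
  then have ex: "\<exists>p. fst p \<in> lists V \<and> snd p \<in> lists V \<and> f = rr (fst p) (snd p)"
    using SS_struct[OF assms(1)] by auto
  let ?p = "SOME p. fst p \<in> lists V \<and> snd p \<in> lists V \<and> f = rr (fst p) (snd p)"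
  have p: "fst ?p \<in> lists V \<and> snd ?p \<in> lists V \<and> f = rr (fst ?p) (snd ?p)" using someI_ex[OF ex] .
  then have "rr (fst ?p) (snd ?p) K = Some L" using assms(2) by simp
  then obtain z where z: "K = cls (z @ fst ?p)" "L = cls (z @ snd ?p)" unfolding rr_Some by blast
  have "cls x = cls (z @ fst ?p)" using z(1) assms(3) by simp
  then have "te x (z @ fst ?p)" using cls_eq by blast
  then have "iota x = iota (z @ fst ?p)" using iota_eq by blast
  then have ix: "iota x = iota z \<otimes>\<^bsub>Gr\<^esub> iota (fst ?p)" using iota_app by simp
  have "cls y = cls (z @ snd ?p)" using z(2) assms(4) by simp
  then have "te y (z @ snd ?p)" using cls_eq by blast
  then have "iota y = iota (z @ snd ?p)" using iota_eq by blast
  then have iy: "iota y = iota z \<otimes>\<^bsub>Gr\<^esub> iota (snd ?p)" using iota_app by simp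
  have "inv\<^bsub>Gr\<^esub> (iota x) \<otimes>\<^bsub>Gr\<^esub> iota y = inv\<^bsub>Gr\<^esub> (iota (fst ?p)) \<otimes>\<^bsub>Gr\<^esub> iota (snd ?p)"
    unfolding ix iy by (rule G.cancel_mid) (simp_all add: iota_carrier)
  then show ?thesis unfolding th_def using ne by (simp add: Let_def)
qed

lemma th_carrier: "th f = Some g \<Longrightarrow> g \<in> carrier Gr"
proof -
  interpret G: group Gr by (rule group_Gr)
  assume "th f = Some g"
  then show "g \<in> carrier Gr" unfolding th_def by (auto simp: Let_def iota_carrier split: if_splits)
qed

lemma rr_diag: assumes "te p q"
  shows "rr p q K = Some L \<longleftrightarrow> (L = K \<and> (\<exists>x\<in>lists V. K = cls (x@p)))"
proof -
  have "cls (x@q) = cls (x@p)" for x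
  proof -
    have "te (x@q) (x@p)" using te_app[OF te_refl te_sym[OF assms]] .
    then show ?thesis using cls_eq by blast
  qed
  then show ?thesis unfolding rr_Some by auto
qed

lemma E1: "\<forall>a\<in>SS. \<forall>g. th a = Some g \<longrightarrow> g \<in> carrier Gr"
  using th_carrier by blast

lemma E2: "\<forall>a\<in>SS. th a = None \<longleftrightarrow> is_zero SS pmult a"
proof
  fix a assume aS: "a \<in> SS"
  show "th a = None \<longleftrightarrow> is_zero SS pmult a"
    using is_zero_iff[OF aS] unfolding th_def by auto
qed

lemma E3: "\<forall>a\<in>SS. th a = Some \<one>\<^bsub>Gr\<^esub> \<longleftrightarrow> (\<not> is_zero SS pmult a \<and> pmult a a = a)"
proof
  interpret G: group Gr by (rule group_Gr)
  fix a assume aS: "a \<in> SS"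
  show "th a = Some \<one>\<^bsub>Gr\<^esub> \<longleftrightarrow> (\<not> is_zero SS pmult a \<and> pmult a a = a)"
  proof (cases "a = Map.empty")
    case True
    then show ?thesis using is_zero_iff[OF aS] unfolding th_def by auto
  next
    case False
    then obtain p q where pq: "p \<in> lists V" "q \<in> lists V" "a = rr p q" using SS_struct[OF aS] by blast
    have aself: "a (cls p) = Some (cls q)" using rr_self[OF pq(1)] pq(3) by simp
    have thpq: "th a = Some (inv\<^bsub>Gr\<^esub> (iota p) \<otimes>\<^bsub>Gr\<^esub> iota q)" using th_pair[OF aS aself] by simp
    have nz: "\<not> is_zero SS pmult a" using is_zero_iff[OF aS] False by simp
    show ?thesis
    proof
      assume "th a = Some \<one>\<^bsub>Gr\<^esub>"
      then have "inv\<^bsub>Gr\<^esub> (iota p) \<otimes>\<^bsub>Gr\<^esub> iota q = \<one>\<^bsub>Gr\<^esub>" using thpq by simp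
      then have "iota q = iota p \<otimes>\<^bsub>Gr\<^esub> \<one>\<^bsub>Gr\<^esub>"
        using G.inv_solve_left'[of "\<one>\<^bsub>Gr\<^esub>" "iota p" "iota q"] iota_carrier by simp
      then have "iota q = iota p" using iota_carrier by simp
      then have "te q p" using iota_eq by blast
      then have tpq: "te p q" by (rule te_sym)
      have "pmult a a = a"
      proof (rule map_eqI)
        fix K N
        show "pmult a a K = Some N \<longleftrightarrow> a K = Some N"
          unfolding pq(3) pmult_Some[of "rr p q" "rr p q"] rr_diag[OF tpq] by auto
      qed
      then show "\<not> is_zero SS pmult a \<and> pmult a a = a" using nz by simp
    next
      assume "\<not> is_zero SS pmult a \<and> pmult a a = a"
      then have idem: "pmult a a = a" by simp
      then have "pmult a a (cls p) = Some (cls q)" using aself by simp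
      then obtain L where "a (cls p) = Some L" "a L = Some (cls q)" unfolding pmult_Some by blast
      then have "a (cls q) = Some (cls q)" using aself by simp
      then have "th a = Some (inv\<^bsub>Gr\<^esub> (iota q) \<otimes>\<^bsub>Gr\<^esub> iota q)" using th_pair[OF aS] by simp
      then show "th a = Some \<one>\<^bsub>Gr\<^esub>" using iota_carrier by simp
    qed
  qed
qed

lemma E4: "\<forall>a\<in>SS. \<forall>b\<in>SS. \<not> is_zero SS pmult (pmult a b) \<longrightarrow> th (pmult a b) = zmult Gr (th a) (th b)"
proof (intro ballI impI)
  interpret G: group Gr by (rule group_Gr)
  fix a b assume aS: "a \<in> SS" and bS: "b \<in> SS" and nz: "\<not> is_zero SS pmult (pmult a b)"
  have abS: "pmult a b \<in> SS" using SS_mult[OF aS bS] .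
  then have "pmult a b \<noteq> Map.empty" using is_zero_iff nz by blast
  then obtain K N where KN: "pmult a b K = Some N" by (metis not_None_eq)
  then obtain L where L: "a K = Some L" "b L = Some N" unfolding pmult_Some by blast
  have "a \<noteq> Map.empty" using L by auto
  then obtain p q where pq: "a = rr p q" using SS_struct[OF aS] by blast
  have "rr p q K = Some L" using L(1) pq by simp
  then obtain x where x: "K = cls (x@p)" "L = cls (x@q)" unfolding rr_Some by blast
  have "b \<noteq> Map.empty" using L by auto
  then obtain c d where cd: "b = rr c d" using SS_struct[OF bS] by blast
  have "rr c d L = Some N" using L(2) cd by simp
  then obtain y where y: "L = cls (y@c)" "N = cls (y@d)" unfolding rr_Some by blast
  have t1: "th a = Some (inv\<^bsub>Gr\<^esub> (iota (x@p)) \<otimes>\<^bsub>Gr\<^esub> iota (x@q))" using th_pair[OF aS L(1) x] .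
  have t2: "th b = Some (inv\<^bsub>Gr\<^esub> (iota (x@q)) \<otimes>\<^bsub>Gr\<^esub> iota (y@d))" using th_pair[OF bS L(2) x(2) y(2)] .
  have t3: "th (pmult a b) = Some (inv\<^bsub>Gr\<^esub> (iota (x@p)) \<otimes>\<^bsub>Gr\<^esub> iota (y@d))" using th_pair[OF abS KN x(1) y(2)] .
  show "th (pmult a b) = zmult Gr (th a) (th b)"
    unfolding t1 t2 t3 zmult_def using G.cancel_mid2[OF iota_carrier iota_carrier iota_carrier, of "x@p" "x@q" "y@d"] by simp
qed

lemma Estar: "strongly_E_star_unitary SS pmult"
  unfolding strongly_E_star_unitary_def strongly_E_star_unitary_wrt_def
  using group_Gr E1 E2 E3 E4 by blast

end

theorem corollary4p6:
  fixes V :: "'v set" and E :: "'v \<Rightarrow> 'v \<Rightarrow> bool"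
  assumes "\<forall>u. \<not> E u u"
    and "\<forall>u v. E u v \<longrightarrow> E v u"
    and "\<forall>u v. E u v \<longrightarrow> u \<in> V \<and> v \<in> V"
  shows "strongly_F_star_inverse (polygraph_monoid V E) pmult"
proof -
  interpret pgctx E V by unfold_locales (use assms in auto)
  show ?thesis unfolding strongly_F_star_inverse_def using Fstar Estar by blast
qed


end
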